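(* Let $A\subset\{1,2,3,\dots\}$ be a set whose natural density $d(A)=\lim_{n\to\infty}\#(A\cap[1,n])/n$ exists and satisfies $d(A)>0$. Then the power series $P_A(z)=\prod_{j\in A}\frac{1}{1-z^j}$, $|z|<1$, belongs to $\mathcal{K}$ (with radius of convergence $1$) and is Gaussian.
   Context: The class $\mathcal{K}$ consists of non-constant power series $f(z)=\sum_{n\ge0}a_nz^n$ with radius of convergence $R\in(0,+\infty]$, with $a_n\ge 0$ for all $n$ and $a_0>0$. For $t\in(0,R)$, $X_t$ is the random variable with $\mathbf{P}(X_t=n)=a_nt^n/f(t)$, $n\ge0$. With $m_f(t)=\mathbf{E}(X_t)$, $\sigma_f^2(t)=\mathbf{V}(X_t)>0$ and $\breve{X}_t=(X_t-m_f(t))/\sigma_f(t)$, $f$ is called Gaussian if $\breve{X}_t$ converges in distribution to a standard normal random variable as $t\uparrow R$. *)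

theory Defs
  imports "HOL-Probability.Probability"
begin

definition in_class_K :: "(nat \<Rightarrow> real) \<Rightarrow> bool" where
  "in_class_K a \<longleftrightarrow> (\<forall>n. a n \<ge> 0) \<and> a 0 > 0 \<and> (\<exists>n>0. a n \<noteq> 0)
      \<and> conv_radius a > 0"

text \<open>f(t), m_f(t) = E X_t, sigma_f^2(t) = V X_t, where P(X_t = n) = a_n t^n / f(t).\<close>

definition ps_val :: "(nat \<Rightarrow> real) \<Rightarrow> real \<Rightarrow> real" where
  "ps_val a t = (\<Sum>n. a n * t ^ n)"

definition ps_mean :: "(nat \<Rightarrow> real) \<Rightarrow> real \<Rightarrow> real" where
  "ps_mean a t = (\<Sum>n. real n * a n * t ^ n) / ps_val a t"

definition ps_var :: "(nat \<Rightarrow> real) \<Rightarrow> real \<Rightarrow> real" where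
  "ps_var a t = (\<Sum>n. (real n - ps_mean a t)\<^sup>2 * a n * t ^ n) / ps_val a t"

definition ps_norm_cdf :: "(nat \<Rightarrow> real) \<Rightarrow> real \<Rightarrow> real \<Rightarrow> real" where
  "ps_norm_cdf a t x =
     (\<Sum>n. if (real n - ps_mean a t) / sqrt (ps_var a t) \<le> x then a n * t ^ n else 0)
       / ps_val a t"

text \<open>Gaussian (for a series in K with finite radius of convergence R):
  convergence in distribution of the normalized X_t to N(0,1) as t tends to R from
  below, expressed via convergence of distribution functions at every point
  (all points are continuity points of the standard normal law).\<close>

definition gaussian_ps :: "(nat \<Rightarrow> real) \<Rightarrow> real \<Rightarrow> bool" where
  "gaussian_ps a R \<longleftrightarrow>
     (\<forall>x::real. ((\<lambda>t. ps_norm_cdf a t x) \<longlongrightarrow> measure std_normal_distribution {..x})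
                 (at_left R))"

text \<open>The infinite product P_A(z) = prod_{j in A} 1/(1 - z^j) as a product over all
  naturals, with factor 1 for j not in A.\<close>

definition PA_factor :: "nat set \<Rightarrow> complex \<Rightarrow> nat \<Rightarrow> complex" where
  "PA_factor A z j = (if j \<in> A then 1 / (1 - z ^ j) else 1)"

end

theory Submission
  imports Defs
begin

definition sig :: "nat set \<Rightarrow> nat \<Rightarrow> real" where
  "sig A n = (\<Sum>j\<in>{j\<in>{1..n}. j \<in> A \<and> j dvd n}. real j)"

function pa :: "nat set \<Rightarrow> nat \<Rightarrow> real" where
  "pa A n = (if n = 0 then 1 else (\<Sum>k=1..n. sig A k * pa A (n - k)) / real n)"
  by pat_completeness auto
termination by (relation "Wellfounded.measure (\<lambda>(A,n). n)") auto

declare pa.simps[simp del]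

lemma sig_0[simp]: "sig A 0 = 0"
  by (simp add: sig_def)

lemma sig_nonneg: "sig A n \<ge> 0"
  unfolding sig_def by (intro sum_nonneg) auto

lemma sig_le: "sig A n \<le> real n ^ 2"
proof -
  have "sig A n \<le> (\<Sum>j\<in>{j\<in>{1..n}. j \<in> A \<and> j dvd n}. real n)"
    unfolding sig_def by (intro sum_mono) auto
  also have "\<dots> = card {j\<in>{1..n}. j \<in> A \<and> j dvd n} * real n" by simp
  also have "\<dots> \<le> card {1..n} * real n"
  proof -
    have "card {j\<in>{1..n}. j \<in> A \<and> j dvd n} \<le> card {1..n}" by (rule card_mono) auto
    then show ?thesis by (intro mult_right_mono) auto
  qed
  finally show ?thesis by (simp add: power2_eq_square)
qed

lemma sig_ge: assumes "n \<in> A" "n \<ge> 1" shows "sig A n \<ge> real n"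
proof -
  have "real n = (\<Sum>j\<in>{n}. real j)" by simp
  also have "\<dots> \<le> sig A n" unfolding sig_def
    by (rule sum_mono2) (use assms in auto)
  finally show ?thesis .
qed

lemma pa_0[simp]: "pa A 0 = 1"
  by (simp add: pa.simps)

lemma pa_rec: "real n * pa A n = (\<Sum>k\<le>n. sig A k * pa A (n - k))"
proof (cases "n = 0")
  case True then show ?thesis by simp
next
  case False
  have "(\<Sum>k\<le>n. sig A k * pa A (n - k)) = (\<Sum>k=1..n. sig A k * pa A (n - k))"
  proof -
    have "{..n} = insert 0 {1..n}" by auto
    then show ?thesis by simp
  qed
  then show ?thesis using False by (subst pa.simps) simp
qed

lemma pa_nonneg: "pa A n \<ge> 0"
proof (induction n rule: less_induct)
  case (less n)
  show ?case
  proof (cases "n = 0")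
    case False
    then show ?thesis
      by (subst pa.simps) (auto intro!: divide_nonneg_nonneg sum_nonneg mult_nonneg_nonneg sig_nonneg less)
  qed simp
qed

lemma pa_ge: assumes "n \<in> A" "n \<ge> 1" shows "pa A n \<ge> 1"
proof -
  have "real n * 1 \<le> sig A n * pa A (n - n)" using sig_ge[OF assms] by simp
  also have "\<dots> \<le> (\<Sum>k\<le>n. sig A k * pa A (n - k))"
    by (rule member_le_sum) (auto intro!: mult_nonneg_nonneg sig_nonneg pa_nonneg)
  also have "\<dots> = real n * pa A n" by (rule pa_rec[symmetric])
  finally show ?thesis using assms by simp
qed

lemma cauchy_sums:
  fixes a b :: "nat \<Rightarrow> 'a::{real_normed_algebra,banach}"
  assumes "summable (\<lambda>k. norm (a k))" "summable (\<lambda>k. norm (b k))" "a sums A" "b sums B"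
  shows "(\<lambda>k. \<Sum>i\<le>k. a i * b (k - i)) sums (A * B)"
  using Cauchy_product_sums[OF assms(1,2)] assms(3,4) by (simp add: sums_iff)

lemma sums_tri:
  fixes x :: real assumes "0 \<le> x" "x < 1"
  shows "(\<lambda>n. (real n + 1) * (real n + 2) / 2 * x ^ n) sums (1 / (1 - x) ^ 3)"
proof -
  have g1: "(\<lambda>n. of_nat (Suc n) * x ^ n) sums (1 / (1 - x)^2)"
    by (rule geometric_deriv_sums) (use assms in auto)
  have g2: "(\<lambda>n. x ^ n) sums (1 / (1 - x))"
    by (rule geometric_sums) (use assms in auto)
  have "(\<lambda>n. \<Sum>i\<le>n. (of_nat (Suc i) * x ^ i) * x ^ (n - i)) sums ((1 / (1 - x)^2) * (1 / (1 - x)))"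
    by (rule cauchy_sums[OF _ _ g1 g2]) (use g1 g2 assms in \<open>auto simp: sums_iff\<close>)
  moreover have "(\<Sum>i\<le>n. (of_nat (Suc i) * x ^ i) * x ^ (n - i)) = (real n + 1) * (real n + 2) / 2 * x ^ n" for n
  proof -
    have "(\<Sum>i\<le>n. (of_nat (Suc i) * x ^ i) * x ^ (n - i)) = (\<Sum>i\<le>n. of_nat (Suc i)) * x ^ n"
      by (simp add: sum_distrib_right mult.assoc power_add[symmetric])
    moreover have "(\<Sum>i\<le>n. real (Suc i)) = (real n + 1) * (real n + 2) / 2"
      by (induction n) (auto simp: field_simps)
    ultimately show ?thesis by simp
  qed
  moreover have "(1 / (1 - x)^2) * (1 / (1 - x)) = 1 / (1 - x) ^ 3"
    by (simp add: power_numeral_reduce field_simps)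
  ultimately show ?thesis
  proof -
    assume h1: "(\<lambda>n. \<Sum>i\<le>n. (of_nat (Suc i) * x ^ i) * x ^ (n - i)) sums ((1 / (1 - x)^2) * (1 / (1 - x)))"
    assume h2: "\<And>n. (\<Sum>i\<le>n. (of_nat (Suc i) * x ^ i) * x ^ (n - i)) = (real n + 1) * (real n + 2) / 2 * x ^ n"
    assume h3: "(1 / (1 - x)^2) * (1 / (1 - x)) = 1 / (1 - x) ^ 3"
    show ?thesis using h1 unfolding h2 h3 .
  qed
qed

lemma summable_sq_pow:
  fixes x :: real assumes "0 \<le> x" "x < 1"
  shows "summable (\<lambda>k. real k ^ 2 * x ^ k)"
  by (rule summable_comparison_test[OF _ summable_mult[OF sums_summable[OF sums_tri[OF assms]], of 2]])
     (auto intro!: exI[of _ 0] mult_right_mono simp: power2_eq_square algebra_simps assms)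


lemma sq_pow_bound:
  fixes x :: real assumes "0 \<le> x" "x < 1"
  shows "(\<Sum>k. real k ^ 2 * x ^ k) \<le> 2 * x / (1 - x) ^ 3"
proof -
  have s: "summable (\<lambda>k. real k ^ 2 * x ^ k)" by (rule summable_sq_pow[OF assms])
  have st: "summable (\<lambda>n. 2 * ((real n + 1) * (real n + 2) / 2 * x ^ n))"
    by (rule summable_mult[OF sums_summable[OF sums_tri[OF assms]]])
  have le: "real (Suc k) ^ 2 * x ^ k \<le> 2 * ((real k + 1) * (real k + 2) / 2 * x ^ k)" for k
    using assms by (auto intro!: mult_right_mono simp: power2_eq_square algebra_simps)
  have s1: "summable (\<lambda>k. real (Suc k) ^ 2 * x ^ k)"
    by (rule summable_comparison_test[OF _ st]) (use le assms in auto)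
  have "(\<Sum>k. real k ^ 2 * x ^ k) = (\<Sum>k. real (Suc k) ^ 2 * x ^ Suc k)"
    using suminf_split_head[OF s] by simp
  also have "\<dots> = (\<Sum>k. x * (real (Suc k) ^ 2 * x ^ k))"
    by (simp add: mult_ac)
  also have "\<dots> = x * (\<Sum>k. real (Suc k) ^ 2 * x ^ k)"
    by (rule suminf_mult[OF s1])
  also have "\<dots> \<le> x * (\<Sum>n. 2 * ((real n + 1) * (real n + 2) / 2 * x ^ n))"
    by (intro mult_left_mono suminf_le s1 st le) (use assms in auto)
  also have "(\<Sum>n. 2 * ((real n + 1) * (real n + 2) / 2 * x ^ n)) = 2 / (1 - x) ^ 3"
    using sums_mult[OF sums_tri[OF assms], of 2] by (simp add: sums_iff)
  finally show ?thesis by (simp add: mult.commute)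
qed

lemma pa_bound:
  fixes r :: real assumes r: "0 < r" "r < 1"
  shows "\<exists>K. \<forall>n. pa A n * r ^ n \<le> K"
proof -
  define Q where "Q = (\<Sum>k. real k ^ 2 * r ^ k)"
  have sQ: "summable (\<lambda>k. real k ^ 2 * r ^ k)" using summable_sq_pow r by simp
  define N0 where "N0 = nat \<lceil>Q\<rceil> + 1"
  define K where "K = max 1 (Max ((\<lambda>n. pa A n * r ^ n) ` {..<N0}))"
  have K1: "K \<ge> 1" unfolding K_def by simp
  have "pa A n * r ^ n \<le> K" for n
  proof (induction n rule: less_induct)
    case (less n)
    show ?case
    proof (cases "n < N0")
      case True
      then have "pa A n * r ^ n \<le> Max ((\<lambda>n. pa A n * r ^ n) ` {..<N0})"
        by (intro Max_ge) auto
      then show ?thesis unfolding K_def by linarith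
    next
      case False
      then have nQ: "real n \<ge> Q" unfolding N0_def by linarith
      have n0: "n > 0" using False unfolding N0_def by auto
      have "real n * (pa A n * r ^ n) = (\<Sum>k\<le>n. (sig A k * r ^ k) * (pa A (n - k) * r ^ (n - k)))"
      proof -
        have "real n * (pa A n * r ^ n) = (\<Sum>k\<le>n. sig A k * pa A (n - k)) * r ^ n"
          by (simp add: pa_rec[symmetric] mult_ac)
        also have "\<dots> = (\<Sum>k\<le>n. (sig A k * r ^ k) * (pa A (n - k) * r ^ (n - k)))"
          unfolding sum_distrib_right
          by (intro sum.cong refl) (simp add: mult_ac power_add[symmetric])
        finally show ?thesis .
      qed
      also have "\<dots> \<le> (\<Sum>k\<le>n. (real k ^ 2 * r ^ k) * K)"
      proof (intro sum_mono)
        fix k assume k: "k \<in> {..n}"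
        show "(sig A k * r ^ k) * (pa A (n - k) * r ^ (n - k)) \<le> (real k ^ 2 * r ^ k) * K"
        proof (cases "k = 0")
          case False
          then have "pa A (n - k) * r ^ (n - k) \<le> K" using less n0 k by auto
          moreover have "sig A k * r ^ k \<le> real k ^ 2 * r ^ k"
            using sig_le r by (intro mult_right_mono) auto
          ultimately show ?thesis
            using r sig_nonneg pa_nonneg by (intro mult_mono) auto
        qed simp
      qed
      also have "\<dots> = (\<Sum>k\<le>n. real k ^ 2 * r ^ k) * K" by (simp add: sum_distrib_right)
      also have "\<dots> \<le> Q * K"
        unfolding Q_def using K1 r
        by (intro mult_right_mono sum_le_suminf sQ) auto
      also have "\<dots> \<le> real n * K" using nQ K1 by (intro mult_right_mono) auto
      finally show ?thesis using n0 by simp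
    qed
  qed
  then show ?thesis by blast
qed

lemma pa_summable:
  fixes r :: real assumes r: "0 \<le> r" "r < 1"
  shows "summable (\<lambda>n. pa A n * r ^ n)"
proof -
  define r' where "r' = (1 + r) / 2"
  have r': "0 < r'" "r' < 1" "r < r'" using r unfolding r'_def by auto
  obtain K where K: "\<And>n. pa A n * r' ^ n \<le> K" using pa_bound[OF r'(1,2)] by blast
  have "summable (\<lambda>n. K * (r / r') ^ n)"
    using r r' by (intro summable_mult summable_geometric) auto
  moreover have "norm (pa A n * r ^ n) \<le> K * (r / r') ^ n" for n
  proof -
    have "pa A n * r ^ n = (pa A n * r' ^ n) * (r / r') ^ n"
      using r' by (simp add: power_divide)
    also have "\<dots> \<le> K * (r / r') ^ n"
      using K r r' by (intro mult_right_mono) auto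
    finally show ?thesis using pa_nonneg r by simp
  qed
  ultimately show ?thesis by (rule summable_comparison_test'[where N=0])
qed

lemma pa_conv_radius_ge: "conv_radius (pa A) \<ge> 1"
proof (rule conv_radius_geI_ex')
  fix r :: real assume "0 < r" "ereal r < 1"
  then show "summable (\<lambda>n. pa A n * of_real r ^ n)"
    using pa_summable[of r A] by simp
qed

definition cl :: "nat set \<Rightarrow> nat \<Rightarrow> real" where
  "cl A n = sig A n / real n"

lemma cl_nonneg: "cl A n \<ge> 0"
  unfolding cl_def using sig_nonneg by simp

lemma cl_le: "cl A n \<le> real n"
proof (cases "n = 0")
  case False
  then show ?thesis unfolding cl_def using sig_le[of A n]
    by (simp add: divide_simps power2_eq_square)
qed (simp add: cl_def)

lemma conv_radius_of_real:
  "conv_radius (\<lambda>n. (of_real (f n) :: 'a :: {real_normed_div_algebra, banach})) = conv_radius f"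
  unfolding conv_radius_def by simp

lemma cl_summable:
  fixes r :: real assumes r: "0 \<le> r" "r < 1"
  shows "summable (\<lambda>n. cl A n * r ^ n)"
proof (rule summable_comparison_test'[OF summable_sq_pow[OF r], where N=0])
  fix n :: nat
  have "cl A n * r ^ n \<le> real n ^ 2 * r ^ n"
  proof (intro mult_right_mono)
    show "cl A n \<le> real n ^ 2" using cl_le[of A n]
      by (cases n) (auto simp: power2_eq_square intro: order_trans)
  qed (use r in auto)
  then show "norm (cl A n * r ^ n) \<le> real n ^ 2 * r ^ n" using cl_nonneg r by simp
qed

lemma cl_conv_radius_ge: "conv_radius (cl A) \<ge> 1"
proof (rule conv_radius_geI_ex')
  fix r :: real assume "0 < r" "ereal r < 1"
  then show "summable (\<lambda>n. cl A n * of_real r ^ n)"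
    using cl_summable[of r A] by simp
qed

definition Fp :: "nat set \<Rightarrow> complex fps" where
  "Fp A = Abs_fps (\<lambda>n. of_real (pa A n))"

definition Lp :: "nat set \<Rightarrow> complex fps" where
  "Lp A = Abs_fps (\<lambda>n. of_real (cl A n))"

lemma Fp_radius: "fps_conv_radius (Fp A) \<ge> 1"
  unfolding fps_conv_radius_def Fp_def using pa_conv_radius_ge[of A]
  by (simp add: conv_radius_of_real)

lemma Lp_radius: "fps_conv_radius (Lp A) \<ge> 1"
  unfolding fps_conv_radius_def Lp_def using cl_conv_radius_ge[of A]
  by (simp add: conv_radius_of_real)

lemma Fp_deriv: "fps_deriv (Fp A) = fps_deriv (Lp A) * Fp A"
proof (rule fps_ext)
  fix n
  have nz: "1 + complex_of_nat i \<noteq> 0" for i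
    by (metis of_nat_Suc nat.distinct(1) of_nat_eq_0_iff)
  have "fps_nth (fps_deriv (Fp A)) n = of_real (real (Suc n) * pa A (Suc n))"
    by (simp add: Fp_def)
  also have "real (Suc n) * pa A (Suc n) = (\<Sum>k\<le>Suc n. sig A k * pa A (Suc n - k))"
    by (rule pa_rec)
  also have "\<dots> = (\<Sum>i\<le>n. sig A (Suc i) * pa A (n - i))"
    by (subst sum.atMost_Suc_shift) simp
  also have "of_real \<dots> = fps_nth (fps_deriv (Lp A) * Fp A) n"
    by (simp add: fps_mult_nth Lp_def Fp_def cl_def atLeast0AtMost)
       (intro sum.cong refl, simp add: nz)
  finally show "fps_nth (fps_deriv (Fp A)) n = fps_nth (fps_deriv (Lp A) * Fp A) n" .
qed

lemma Fp_exp: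
  assumes "norm z < 1"
  shows "eval_fps (Fp A) z = exp (eval_fps (Lp A) z)"
proof -
  define h where "h = (\<lambda>z. eval_fps (Fp A) z * exp (- eval_fps (Lp A) z))"
  have "\<exists>c. \<forall>x\<in>ball 0 1. h x = c"
  proof (rule has_field_derivative_zero_constant)
    fix x :: complex assume "x \<in> ball 0 1"
    then have x: "ereal (norm x) < 1" by simp
    have rF: "norm x < fps_conv_radius (Fp A)" using x Fp_radius[of A] by (meson less_le_trans)
    have rL: "norm x < fps_conv_radius (Lp A)" using x Lp_radius[of A] by (meson less_le_trans)
    have rL': "norm x < fps_conv_radius (fps_deriv (Lp A))"
      using rL fps_conv_radius_deriv[of "Lp A"] by (meson less_le_trans)
    have dF: "eval_fps (fps_deriv (Fp A)) x = eval_fps (fps_deriv (Lp A)) x * eval_fps (Fp A) x"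
      by (subst Fp_deriv) (rule eval_fps_mult[OF rL' rF])
    have d1: "(eval_fps (Fp A) has_field_derivative eval_fps (fps_deriv (Fp A)) x) (at x within ball 0 1)"
      by (rule has_field_derivative_eval_fps[OF rF])
    have d2: "(eval_fps (Lp A) has_field_derivative eval_fps (fps_deriv (Lp A)) x) (at x within ball 0 1)"
      by (rule has_field_derivative_eval_fps[OF rL])
    have d3: "((\<lambda>z. exp (- eval_fps (Lp A) z)) has_field_derivative
                 exp (- eval_fps (Lp A) x) * (- eval_fps (fps_deriv (Lp A)) x)) (at x within ball 0 1)"
      by (rule DERIV_chain2[OF DERIV_exp]) (rule DERIV_minus[OF d2])
    have "(h has_field_derivative
            (eval_fps (fps_deriv (Fp A)) x * exp (- eval_fps (Lp A) x) +
             (exp (- eval_fps (Lp A) x) * (- eval_fps (fps_deriv (Lp A)) x)) * eval_fps (Fp A) x))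
            (at x within ball 0 1)"
      unfolding h_def by (rule DERIV_mult[OF d1 d3])
    also have "(eval_fps (fps_deriv (Fp A)) x * exp (- eval_fps (Lp A) x) +
             (exp (- eval_fps (Lp A) x) * (- eval_fps (fps_deriv (Lp A)) x)) * eval_fps (Fp A) x) = 0"
      unfolding dF by (simp add: algebra_simps)
    finally show "(h has_field_derivative 0) (at x within ball 0 1)" .
  qed simp
  then obtain c where c: "\<And>x. x \<in> ball 0 1 \<Longrightarrow> h x = c" by blast
  have "h 0 = 1" unfolding h_def by (simp add: eval_fps_at_0 Fp_def Lp_def cl_def)
  then have "h z = 1" using c[of 0] c[of z] assms by simp
  then show ?thesis unfolding h_def by (simp add: exp_minus field_simps)
qed

definition hh :: "complex \<Rightarrow> nat \<times> nat \<Rightarrow> complex" where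
  "hh z p = z ^ (fst p * snd p) / of_nat (snd p)"

lemma pair_summable:
  fixes z :: complex assumes z: "norm z < 1" and A1: "A \<subseteq> {1..}"
  shows "(\<lambda>p. norm (hh z p)) summable_on (Sigma A (\<lambda>_. {1::nat..}))"
proof -
  define r where "r = norm z"
  define s where "s = sqrt r"
  have s: "0 \<le> s" "s < 1" using z unfolding s_def r_def by auto
  have r: "r = s ^ 2" "0 \<le> r" unfolding s_def r_def by auto
  have key: "norm (hh z p) \<le> s ^ fst p * s ^ snd p"
    if p: "p \<in> Sigma A (\<lambda>_. {1::nat..})" for p
  proof -
    obtain j k where jk: "p = (j,k)" "j \<ge> 1" "k \<ge> 1" using p A1 by (cases p) auto
    have "norm (hh z p) = r ^ (j * k) / real k"
      by (simp add: norm_divide norm_power r_def hh_def jk)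
    also have "\<dots> \<le> r ^ (j * k)"
      using jk r by (auto simp: divide_simps intro!: mult_left_mono[of 1 "real k", simplified])
    also have "\<dots> = s ^ (2 * (j * k))" by (simp add: r power_mult)
    also have "\<dots> \<le> s ^ (j + k)"
    proof (rule power_decreasing)
      have "j \<le> j * k" "k \<le> j * k" using jk by auto
      then show "j + k \<le> 2 * (j * k)" by linarith
    qed (use s in auto)
    finally show ?thesis using jk by (simp add: power_add)
  qed
  have geo: "sum (\<lambda>j. s ^ j) X \<le> 1 / (1 - s)" if "finite X" for X
  proof -
    have "sum (\<lambda>j. s ^ j) X \<le> (\<Sum>j. s ^ j)"
      by (rule sum_le_suminf) (use s that in \<open>auto intro: summable_geometric\<close>)
    also have "\<dots> = 1 / (1 - s)" using suminf_geometric[of s] s by simp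
    finally show ?thesis .
  qed
  show ?thesis
  proof (rule nonneg_bdd_above_summable_on)
    show "bdd_above (sum (\<lambda>p. norm (hh z p)) ` {F. F \<subseteq> Sigma A (\<lambda>_. {1::nat..}) \<and> finite F})"
    proof (rule bdd_aboveI2)
      fix F assume F: "F \<in> {F. F \<subseteq> Sigma A (\<lambda>_. {1::nat..}) \<and> finite F}"
      then have Ff: "finite F" and FI: "F \<subseteq> Sigma A (\<lambda>_. {1::nat..})" by auto
      have "sum (\<lambda>p. norm (hh z p)) F \<le> sum (\<lambda>p. s ^ fst p * s ^ snd p) F"
        using key FI by (intro sum_mono) auto
      also have "\<dots> \<le> sum (\<lambda>p. s ^ fst p * s ^ snd p) (fst ` F \<times> snd ` F)"
        by (rule sum_mono2) (use Ff s in \<open>auto intro: rev_image_eqI\<close>)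
      also have "\<dots> = sum (\<lambda>j. s ^ j) (fst ` F) * sum (\<lambda>k. s ^ k) (snd ` F)"
        by (simp add: sum_product sum.cartesian_product case_prod_beta)
      also have "\<dots> \<le> (1 / (1 - s)) * (1 / (1 - s))"
        using geo Ff s by (intro mult_mono) (auto intro: sum_nonneg)
      finally show "sum (\<lambda>p. norm (hh z p)) F \<le> (1 / (1 - s)) * (1 / (1 - s))" .
    qed
  qed simp
qed

lemma log_series:
  fixes w :: complex assumes w: "norm w < 1"
  shows "((\<lambda>n. w ^ n / of_nat n) has_sum (- Ln (1 - w))) UNIV"
proof -
  have "(\<lambda>n. - ((- (- w)) ^ n) / of_nat n) sums ln (1 + - w)"
    by (rule Ln_series') (use w in simp)
  then have "(\<lambda>n. - (w ^ n / of_nat n)) sums Ln (1 - w)" by simp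
  then have s: "(\<lambda>n. w ^ n / of_nat n) sums (- Ln (1 - w))"
    using sums_minus by fastforce
  have "summable (\<lambda>n. norm w ^ n)" using w by (intro summable_geometric) auto
  then have "summable (\<lambda>n. norm (w ^ n / of_nat n))"
  proof (rule summable_comparison_test'[where N=0])
    fix n :: nat
    have e: "norm (norm (w ^ n / of_nat n)) = norm w ^ n / real n"
      by (simp add: norm_divide norm_power)
    have "norm w ^ n / real n \<le> norm w ^ n"
      using mult_left_mono[of 1 "real n" "norm w ^ n"]
      by (cases "n = 0") (auto simp: divide_le_eq)
    then show "norm (norm (w ^ n / of_nat n)) \<le> norm w ^ n" using e by simp
  qed
  then show ?thesis by (rule norm_summable_imp_has_sum[OF _ s])
qed

lemma Lp_sums:
  fixes z :: complex assumes z: "norm z < 1" and A1: "A \<subseteq> {1..}"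
  shows "(\<lambda>j. if j \<in> A then - Ln (1 - z ^ j) else 0) sums eval_fps (Lp A) z"
proof -
  define I where "I = Sigma A (\<lambda>_. {1::nat..})"
  have summ: "hh z summable_on I"
    unfolding I_def by (rule abs_summable_summable[OF pair_summable[OF z A1]])
  define S where "S = infsum (hh z) I"
  have hS: "(hh z has_sum S) I" unfolding S_def using summ by simp
  have inner: "((\<lambda>k. hh z (j, k)) has_sum (- Ln (1 - z ^ j))) {1..}" if j: "j \<in> A" for j
  proof -
    have j1: "j \<ge> 1" using j A1 by auto
    have wn: "norm (z ^ j) < 1"
      using j1 z power_decreasing[of 1 j "norm z"] by (simp add: norm_power)
    have "((\<lambda>n. (z ^ j) ^ n / of_nat n) has_sum (- Ln (1 - z ^ j))) UNIV"
      by (rule log_series[OF wn])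
    then show ?thesis
      by (subst has_sum_cong_neutral[where T=UNIV and g="\<lambda>n. (z ^ j) ^ n / of_nat n"])
         (auto simp: hh_def power_mult not_less_eq_eq)
  qed
  have s1: "((\<lambda>j. - Ln (1 - z ^ j)) has_sum S) A"
    by (rule has_sum_SigmaD[OF hS[unfolded I_def] inner])
  have s1': "((\<lambda>j. if j \<in> A then - Ln (1 - z ^ j) else 0) has_sum S) UNIV"
    using s1 by (subst has_sum_cong_neutral[where T=A and g="\<lambda>j. - Ln (1 - z ^ j)"]) auto
  define D where "D = (\<lambda>n. {j\<in>{1..n}. j \<in> A \<and> j dvd n})"
  define J where "J = Sigma {1::nat..} D"
  define h2 where "h2 = (\<lambda>p. z ^ fst p * of_real (1 / real (fst p div snd p)) :: complex)"
  have "(hh z has_sum S) I = (h2 has_sum S) J"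
  proof (rule has_sum_reindex_bij_witness[where i="\<lambda>(n,j). (j, n div j)" and j="\<lambda>(j,k). (j*k, j)"])
    fix a assume "a \<in> I" then show "(\<lambda>(n,j). (j, n div j)) ((\<lambda>(j,k). (j*k, j)) a) = a"
      using A1 unfolding I_def by auto
  next
    fix a assume "a \<in> I" then show "(\<lambda>(j,k). (j*k, j)) a \<in> J"
      using A1 unfolding I_def J_def D_def by auto
  next
    fix b assume "b \<in> J" then show "(\<lambda>(j,k). (j*k, j)) ((\<lambda>(n,j). (j, n div j)) b) = b"
      unfolding J_def D_def by auto
  next
    fix b assume "b \<in> J" then show "(\<lambda>(n,j). (j, n div j)) b \<in> I"
      unfolding J_def D_def I_def by (auto simp: div_greater_zero_iff dvd_imp_le)
  next
    fix a assume "a \<in> I" then show "h2 ((\<lambda>(j,k). (j*k, j)) a) = hh z a"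
      using A1 unfolding I_def h2_def hh_def by (auto simp: divide_inverse)
  qed simp
  with hS have hJ: "(h2 has_sum S) J" by simp
  have inner2: "((\<lambda>j. h2 (n, j)) has_sum (of_real (cl A n) * z ^ n)) (D n)" if "n \<in> {1..}" for n
  proof -
    have fin: "finite (D n)" unfolding D_def by auto
    have "(\<Sum>j\<in>D n. h2 (n, j)) = z ^ n * of_real (\<Sum>j\<in>D n. 1 / real (n div j))"
      unfolding h2_def by (simp add: sum_distrib_left)
    also have "(\<Sum>j\<in>D n. 1 / real (n div j)) = (\<Sum>j\<in>D n. real j / real n)"
      by (intro sum.cong refl) (auto simp: D_def real_of_nat_div)
    also have "\<dots> = cl A n"
      unfolding cl_def sig_def D_def by (simp add: sum_divide_distrib)
    finally have "(\<Sum>j\<in>D n. h2 (n, j)) = of_real (cl A n) * z ^ n" by (simp add: mult.commute)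
    then show ?thesis using has_sum_finite[OF fin, of "\<lambda>j. h2 (n, j)"] by simp
  qed
  have s2: "((\<lambda>n. of_real (cl A n) * z ^ n) has_sum S) {1..}"
    by (rule has_sum_SigmaD[OF hJ[unfolded J_def] inner2])
  have s2': "((\<lambda>n. of_real (cl A n) * z ^ n) has_sum S) UNIV"
    using s2 by (subst has_sum_cong_neutral[where T="{1..}" and g="\<lambda>n. of_real (cl A n) * z ^ n"])
                (auto simp: cl_def not_less_eq_eq)
  have "eval_fps (Lp A) z = S"
    using has_sum_imp_sums[OF s2'] unfolding eval_fps_def Lp_def by (simp add: sums_iff)
  then show ?thesis using has_sum_imp_sums[OF s1'] by simp
qed

lemma summable_npow:
  fixes t :: real assumes t: "0 \<le> t" "t < 1"
  shows "summable (\<lambda>n. real n ^ k * t ^ n)"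
proof (rule root_test_convergence)
  have "(\<lambda>n. root n (real n) ^ k * t) \<longlonglongrightarrow> 1 ^ k * t"
    by (intro tendsto_intros LIMSEQ_root)
  moreover have "eventually (\<lambda>n. root n (real n) ^ k * t = root n (norm (real n ^ k * t ^ n))) sequentially"
    using eventually_gt_at_top[of 0]
  proof eventually_elim
    case (elim n)
    then show ?case using t
      by (simp add: abs_mult real_root_mult real_root_power real_root_power_cancel)
  qed
  ultimately show "(\<lambda>n. root n (norm (real n ^ k * t ^ n))) \<longlonglongrightarrow> t"
    by (simp add: tendsto_cong)
qed (use t in simp)

lemma summable_sig_pow:
  fixes t :: real assumes t: "0 \<le> t" "t < 1"
  shows "summable (\<lambda>n. real n ^ k * sig A n * t ^ n)"
proof (rule summable_comparison_test'[OF summable_npow[OF t, of "k+2"], where N=0])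
  fix n :: nat
  have "real n ^ k * sig A n * t ^ n \<le> real n ^ k * real n ^ 2 * t ^ n"
    using sig_le[of A n] t by (intro mult_right_mono mult_left_mono) auto
  then show "norm (real n ^ k * sig A n * t ^ n) \<le> real n ^ (k + 2) * t ^ n"
    using sig_nonneg[of A n] t by (simp add: power_add mult_ac power2_eq_square)
qed

lemma summable_npa:
  fixes t :: real assumes t: "0 \<le> t" "t < 1"
  shows "summable (\<lambda>n. real n ^ k * pa A n * t ^ n)"
proof -
  define s where "s = (1 + t) / 2"
  have s: "0 < s" "s < 1" "t < s" using t unfolding s_def by auto
  obtain K where K: "\<And>n. pa A n * s ^ n \<le> K" using pa_bound[OF s(1,2)] by blast
  have "summable (\<lambda>n. K * (real n ^ k * (t / s) ^ n))"
    using s t by (intro summable_mult summable_npow) auto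
  then show ?thesis
  proof (rule summable_comparison_test'[where N=0])
    fix n :: nat
    have "real n ^ k * pa A n * t ^ n = real n ^ k * (t / s) ^ n * (pa A n * s ^ n)"
      using s by (simp add: power_divide)
    also have "\<dots> \<le> real n ^ k * (t / s) ^ n * K"
      using K s t by (intro mult_left_mono) auto
    finally show "norm (real n ^ k * pa A n * t ^ n) \<le> K * (real n ^ k * (t / s) ^ n)"
      using pa_nonneg[of A n] t by (simp add: mult_ac)
  qed
qed

definition "Fr A t = (\<Sum>n. pa A n * t ^ n)"
definition "Sr A t = (\<Sum>n. sig A n * t ^ n)"
definition "Br A t = (\<Sum>n. real n * sig A n * t ^ n)"
definition "Cr A t = (\<Sum>n. real n ^ 2 * sig A n * t ^ n)"
definition "M1 A t = (\<Sum>n. real n * pa A n * t ^ n)"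
definition "M2 A t = (\<Sum>n. real n ^ 2 * pa A n * t ^ n)"

context
  fixes A :: "nat set" and t :: real
  assumes t: "0 \<le> t" "t < 1"
begin

lemma sF: "summable (\<lambda>n. pa A n * t ^ n)"
  using summable_npa[OF t, of 0 A] by simp
lemma sS: "summable (\<lambda>n. sig A n * t ^ n)"
  using summable_sig_pow[OF t, of 0 A] by simp
lemma sB: "summable (\<lambda>n. real n * sig A n * t ^ n)"
  using summable_sig_pow[OF t, of 1 A] by simp
lemma sC: "summable (\<lambda>n. real n ^ 2 * sig A n * t ^ n)"
  using summable_sig_pow[OF t, of 2 A] by simp
lemma sM1: "summable (\<lambda>n. real n * pa A n * t ^ n)"
  using summable_npa[OF t, of 1 A] by simp
lemma sM2: "summable (\<lambda>n. real n ^ 2 * pa A n * t ^ n)"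
  using summable_npa[OF t, of 2 A] by simp

lemma nn: "0 \<le> pa A n * t ^ n" "0 \<le> sig A n * t ^ n" "0 \<le> real n * sig A n * t ^ n"
  "0 \<le> real n * pa A n * t ^ n"
  using pa_nonneg sig_nonneg t by auto

lemma M1_eq: "M1 A t = Sr A t * Fr A t"
proof -
  have "(\<lambda>k. \<Sum>i\<le>k. (sig A i * t ^ i) * (pa A (k - i) * t ^ (k - i))) sums (Sr A t * Fr A t)"
    unfolding Sr_def Fr_def
    by (rule cauchy_sums) (use sS sF nn in \<open>auto simp: summable_sums\<close>)
  moreover have "(\<Sum>i\<le>k. (sig A i * t ^ i) * (pa A (k - i) * t ^ (k - i))) = real k * pa A k * t ^ k" for k
  proof -
    have "(\<Sum>i\<le>k. (sig A i * t ^ i) * (pa A (k - i) * t ^ (k - i))) = (\<Sum>i\<le>k. sig A i * pa A (k - i)) * t ^ k"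
      unfolding sum_distrib_right by (intro sum.cong refl) (simp add: mult_ac power_add[symmetric])
    then show ?thesis by (simp add: pa_rec)
  qed
  ultimately show ?thesis unfolding M1_def by (simp add: sums_iff)
qed

lemma M2_eq: "M2 A t = Br A t * Fr A t + Sr A t * M1 A t"
proof -
  have c1: "(\<lambda>k. \<Sum>i\<le>k. (real i * sig A i * t ^ i) * (pa A (k - i) * t ^ (k - i))) sums (Br A t * Fr A t)"
    unfolding Br_def Fr_def
    by (rule cauchy_sums) (use sB sF nn in \<open>auto simp: summable_sums\<close>)
  have c2: "(\<lambda>k. \<Sum>i\<le>k. (sig A i * t ^ i) * (real (k - i) * pa A (k - i) * t ^ (k - i))) sums (Sr A t * M1 A t)"
    unfolding Sr_def M1_def
    by (rule cauchy_sums) (use sS sM1 nn in \<open>auto simp: summable_sums\<close>)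
  have "(\<Sum>i\<le>k. (real i * sig A i * t ^ i) * (pa A (k - i) * t ^ (k - i))) +
        (\<Sum>i\<le>k. (sig A i * t ^ i) * (real (k - i) * pa A (k - i) * t ^ (k - i)))
        = real k ^ 2 * pa A k * t ^ k" for k
  proof -
    have "(\<Sum>i\<le>k. (real i * sig A i * t ^ i) * (pa A (k - i) * t ^ (k - i))) +
        (\<Sum>i\<le>k. (sig A i * t ^ i) * (real (k - i) * pa A (k - i) * t ^ (k - i)))
        = (\<Sum>i\<le>k. real k * (sig A i * pa A (k - i)) * t ^ k)"
      unfolding sum.distrib[symmetric]
    proof (intro sum.cong refl)
      fix i assume "i \<in> {..k}"
      then have ik: "i \<le> k" by simp
      have tp: "t ^ i * t ^ (k - i) = t ^ k" using ik by (simp add: power_add[symmetric])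
      have "real i + real (k - i) = real k" using ik by simp
      then show "(real i * sig A i * t ^ i) * (pa A (k - i) * t ^ (k - i)) +
          (sig A i * t ^ i) * (real (k - i) * pa A (k - i) * t ^ (k - i)) =
          real k * (sig A i * pa A (k - i)) * t ^ k"
        using tp by (simp add: algebra_simps)
    qed
    also have "\<dots> = real k * (real k * pa A k) * t ^ k"
      by (simp add: sum_distrib_right[symmetric] sum_distrib_left[symmetric] pa_rec)
    finally show ?thesis by (simp add: power2_eq_square mult_ac)
  qed
  with sums_add[OF c1 c2] have "(\<lambda>k. real k ^ 2 * pa A k * t ^ k) sums (Br A t * Fr A t + Sr A t * M1 A t)"
    by simp
  then show ?thesis unfolding M2_def by (simp add: sums_iff)
qed

lemma Fr_ge1: "Fr A t \<ge> 1"
proof -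
  have "pa A 0 * t ^ 0 \<le> Fr A t"
    unfolding Fr_def using sum_le_suminf[OF sF, of "{0}"] nn by simp
  then show ?thesis by simp
qed

lemma ps_val_eq: "ps_val (pa A) t = Fr A t"
  by (simp add: ps_val_def Fr_def)

lemma ps_mean_eq: "ps_mean (pa A) t = Sr A t"
  using Fr_ge1 by (simp add: ps_mean_def ps_val_eq M1_def[symmetric] M1_eq)

lemma ps_var_eq: "ps_var (pa A) t = Br A t"
proof -
  define m where "m = Sr A t"
  have "(\<lambda>n. real n ^ 2 * pa A n * t ^ n - 2 * m * (real n * pa A n * t ^ n) + m ^ 2 * (pa A n * t ^ n))
        sums (M2 A t - 2 * m * M1 A t + m ^ 2 * Fr A t)"
    unfolding M2_def M1_def Fr_def
    by (intro sums_add sums_diff sums_mult summable_sums sM2 sM1 sF)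
  moreover have "(real n ^ 2 * pa A n * t ^ n - 2 * m * (real n * pa A n * t ^ n) + m ^ 2 * (pa A n * t ^ n))
       = (real n - ps_mean (pa A) t)\<^sup>2 * pa A n * t ^ n" for n
    unfolding ps_mean_eq m_def[symmetric] by (simp add: power2_eq_square algebra_simps)
  moreover have "M2 A t - 2 * m * M1 A t + m ^ 2 * Fr A t = Br A t * Fr A t"
    unfolding M2_eq M1_eq m_def by (simp add: power2_eq_square algebra_simps)
  ultimately have "(\<lambda>n. (real n - ps_mean (pa A) t)\<^sup>2 * pa A n * t ^ n) sums (Br A t * Fr A t)"
    by simp
  then show ?thesis using Fr_ge1 unfolding ps_var_def ps_val_eq by (simp add: sums_iff)
qed

end

lemma jpow_le:
  fixes v :: real assumes v: "0 \<le> v" "v \<le> 1"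
  shows "real j * v ^ j * (1 - v) \<le> 1 - v ^ j"
proof -
  have "real j * v ^ j = (\<Sum>i<j. v ^ j)" by simp
  also have "\<dots> \<le> (\<Sum>i<j. v ^ i)"
    by (intro sum_mono power_decreasing) (use v in auto)
  finally have "real j * v ^ j * (1 - v) \<le> (\<Sum>i<j. v ^ i) * (1 - v)"
    using v by (intro mult_right_mono) auto
  also have "\<dots> = 1 - v ^ j" by (simp add: one_diff_power_eq mult.commute)
  finally show ?thesis .
qed

lemma term_bound:
  fixes t v :: real assumes v: "0 < v" "v < 1" and tv: "t = v ^ 4" and j: "j \<ge> 1"
  shows "real j ^ 3 * (2 * t ^ j / (1 - t ^ j) ^ 3) \<le> 2 * v ^ j / (1 - v) ^ 3"
proof -
  have t: "0 < t" "t < 1" using v tv by (auto simp: power_less_one_iff)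
  have tj: "0 < t ^ j" "t ^ j < 1" using t j by (auto simp: power_less_one_iff)
  have "t \<le> v" unfolding tv using v by (simp add: power_le_one power_decreasing[of 1 4 v, simplified])
  then have tvj: "t ^ j \<le> v ^ j" using t by (intro power_mono) auto
  have 1: "real j * v ^ j * (1 - v) \<le> 1 - t ^ j"
    using jpow_le[of v j] v tvj by linarith
  have 2: "(real j * v ^ j) ^ 3 * (1 - v) ^ 3 \<le> (1 - t ^ j) ^ 3"
    using power_mono[OF 1, of 3] v by (simp add: power_mult_distrib)
  have "real j ^ 3 * t ^ j = (real j * v ^ j) ^ 3 * v ^ j"
    by (simp add: tv power_mult_distrib power_mult[symmetric] power_add[symmetric])
  also have "\<dots> \<le> (1 - t ^ j) ^ 3 / (1 - v) ^ 3 * v ^ j"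
    using 2 v by (intro mult_right_mono) (auto simp: field_simps)
  finally have "real j ^ 3 * t ^ j \<le> (1 - t ^ j) ^ 3 / (1 - v) ^ 3 * v ^ j" .
  then show ?thesis using tj v by (simp add: field_simps)
qed

lemma Cr_bound:
  fixes t :: real assumes t: "0 < t" "t < 1"
  shows "Cr A t \<le> 512 / (1 - t) ^ 4"
proof -
  define v where "v = sqrt (sqrt t)"
  have v4: "v ^ 4 = t"
  proof -
    have "v ^ 4 = (v ^ 2) ^ 2" by (simp add: power_mult[symmetric])
    also have "\<dots> = t" unfolding v_def using t by simp
    finally show ?thesis .
  qed
  have v: "0 < v" "v < 1" "t = v ^ 4" using t v4 unfolding v_def by auto
  have "(\<Sum>n<N. real n ^ 2 * sig A n * t ^ n) \<le> 2 / (1 - v) ^ 4" for N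
  proof -
    define P where "P = Sigma {..<N} (\<lambda>n. {j\<in>{1..n}. j dvd n})"
    have finP: "finite P" unfolding P_def by auto
    have "(\<Sum>n<N. real n ^ 2 * sig A n * t ^ n) \<le> (\<Sum>n<N. \<Sum>j\<in>{j\<in>{1..n}. j dvd n}. real n ^ 2 * real j * t ^ n)"
    proof (intro sum_mono)
      fix n assume "n \<in> {..<N}"
      have "real n ^ 2 * sig A n * t ^ n = (\<Sum>j\<in>{j\<in>{1..n}. j \<in> A \<and> j dvd n}. real n ^ 2 * real j * t ^ n)"
        unfolding sig_def by (simp add: sum_distrib_left sum_distrib_right mult_ac)
      also have "\<dots> \<le> (\<Sum>j\<in>{j\<in>{1..n}. j dvd n}. real n ^ 2 * real j * t ^ n)"
        by (rule sum_mono2) (use t in auto)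
      finally show "real n ^ 2 * sig A n * t ^ n \<le> (\<Sum>j\<in>{j\<in>{1..n}. j dvd n}. real n ^ 2 * real j * t ^ n)" .
    qed
    also have "\<dots> = (\<Sum>p\<in>P. real (fst p) ^ 2 * real (snd p) * t ^ fst p)"
      unfolding P_def by (simp add: sum.Sigma case_prod_beta)
    also have "\<dots> = (\<Sum>q\<in>(\<lambda>p. (snd p, fst p div snd p)) ` P. real (fst q * snd q) ^ 2 * real (fst q) * t ^ (fst q * snd q))"
    proof (subst sum.reindex)
      show "inj_on (\<lambda>p. (snd p, fst p div snd p)) P"
        unfolding P_def inj_on_def by auto
    qed (auto simp: P_def intro!: sum.cong)
    also have "\<dots> \<le> (\<Sum>q\<in>{1..N}\<times>{1..N}. real (fst q * snd q) ^ 2 * real (fst q) * t ^ (fst q * snd q))"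
    proof (rule sum_mono2)
      show "(\<lambda>p. (snd p, fst p div snd p)) ` P \<subseteq> {1..N}\<times>{1..N}"
        unfolding P_def by (auto simp: div_greater_zero_iff dvd_imp_le) (meson div_le_dividend le_trans less_imp_le)
    qed (use t in auto)
    also have "\<dots> = (\<Sum>j=1..N. real j ^ 3 * (\<Sum>k=1..N. real k ^ 2 * (t ^ j) ^ k))"
    proof -
      have cp: "(\<Sum>q\<in>{1..N}\<times>{1..N}. f q) = (\<Sum>j=1..N. \<Sum>k=1..N. f (j,k))" for f :: "nat \<times> nat \<Rightarrow> real"
        by (simp add: sum.cartesian_product)
      show ?thesis unfolding cp
        by (simp add: sum_distrib_left power_mult power_mult_distrib mult_ac power2_eq_square power3_eq_cube)
    qed
    also have "\<dots> \<le> (\<Sum>j=1..N. real j ^ 3 * (2 * t ^ j / (1 - t ^ j) ^ 3))"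
    proof (intro sum_mono mult_left_mono)
      fix j assume j: "j \<in> {1..N}"
      have tj: "0 \<le> t ^ j" "t ^ j < 1" using t j by (auto simp: power_less_one_iff)
      have "(\<Sum>k=1..N. real k ^ 2 * (t ^ j) ^ k) \<le> (\<Sum>k. real k ^ 2 * (t ^ j) ^ k)"
        by (rule sum_le_suminf) (use summable_sq_pow[OF tj] tj in auto)
      also have "\<dots> \<le> 2 * t ^ j / (1 - t ^ j) ^ 3" by (rule sq_pow_bound[OF tj])
      finally show "(\<Sum>k=1..N. real k ^ 2 * (t ^ j) ^ k) \<le> 2 * t ^ j / (1 - t ^ j) ^ 3" .
    qed simp
    also have "\<dots> \<le> (\<Sum>j=1..N. 2 * v ^ j / (1 - v) ^ 3)"
      by (intro sum_mono term_bound v) auto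
    also have "\<dots> = 2 / (1 - v) ^ 3 * (\<Sum>j=1..N. v ^ j)"
      by (simp add: sum_distrib_left)
    also have "\<dots> \<le> 2 / (1 - v) ^ 3 * (1 / (1 - v))"
    proof (rule mult_left_mono)
      have "(\<Sum>j=1..N. v ^ j) \<le> (\<Sum>j. v ^ j)"
        by (rule sum_le_suminf) (use v in \<open>auto intro: summable_geometric\<close>)
      also have "\<dots> = 1 / (1 - v)" using suminf_geometric[of v] v by simp
      finally show "(\<Sum>j=1..N. v ^ j) \<le> 1 / (1 - v)" .
    qed (use v in simp)
    also have "\<dots> = 2 / (1 - v) ^ 4" by (simp add: power_numeral_reduce)
    finally show ?thesis .
  qed
  then have "Cr A t \<le> 2 / (1 - v) ^ 4"
    unfolding Cr_def by (intro suminf_le_const sC) (use t in auto)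
  also have "\<dots> \<le> 512 / (1 - t) ^ 4"
  proof -
    have "1 - t = (1 - v) * (1 + v + v^2 + v^3)" using v by (simp add: algebra_simps power_numeral_reduce)
    also have "\<dots> \<le> (1 - v) * 4"
    proof -
      have "v^2 \<le> 1" "v^3 \<le> 1" using v by (auto intro: power_le_one)
      then show ?thesis using v by (intro mult_left_mono) auto
    qed
    finally have "(1 - t) ^ 4 \<le> ((1 - v) * 4) ^ 4" using t by (intro power_mono) auto
    also have "((1 - v) * 4) ^ 4 = 256 * (1 - v) ^ 4" by (simp only: power_mult_distrib) simp
    finally have "(1 - t) ^ 4 \<le> 256 * (1 - v) ^ 4" .
    then show ?thesis using v t by (simp add: field_simps)
  qed
  finally show ?thesis .
qed

lemma Br_lower_pt:
  fixes t :: real and N :: nat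
  assumes t: "0 < t" "t < 1" and A1: "A \<subseteq> {1..}"
  shows "Br A t \<ge> real (card (A \<inter> {N<..2*N})) * real N ^ 2 * t ^ (2 * N)"
proof -
  define X where "X = A \<inter> {N<..2*N}"
  have fin: "finite X" unfolding X_def by auto
  have "real (card X) * real N ^ 2 * t ^ (2 * N) = (\<Sum>n\<in>X. real N * real N * t ^ (2 * N))"
    by (simp add: power2_eq_square)
  also have "\<dots> \<le> (\<Sum>n\<in>X. real n * sig A n * t ^ n)"
  proof (intro sum_mono)
    fix n assume n: "n \<in> X"
    then have nA: "n \<in> A" "n \<ge> 1" "N \<le> n" "n \<le> 2 * N" using A1 unfolding X_def by auto
    have "real N \<le> sig A n" using sig_ge[OF nA(1,2)] nA by linarith
    moreover have "t ^ (2 * N) \<le> t ^ n" using t nA by (intro power_decreasing) auto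
    ultimately show "real N * real N * t ^ (2 * N) \<le> real n * sig A n * t ^ n"
      using nA t by (intro mult_mono) auto
  qed
  also have "\<dots> \<le> Br A t"
    unfolding Br_def by (rule sum_le_suminf[OF sB fin]) (use t sig_nonneg in auto)
  finally show ?thesis unfolding X_def .
qed

lemma Br_lower:
  fixes \<delta> :: real
  assumes A1: "A \<subseteq> {1..}"
    and dens: "(\<lambda>n. real (card (A \<inter> {1..n})) / real n) \<longlonglongrightarrow> \<delta>" and d: "\<delta> > 0"
  shows "eventually (\<lambda>t. Br A t \<ge> (\<delta> / 2048) / (1 - t) ^ 3) (at_left 1)"
proof -
  have "eventually (\<lambda>n. dist (real (card (A \<inter> {1..n})) / real n) \<delta> < \<delta> / 6) sequentially"
    using dens d by (intro tendstoD) auto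
  then obtain M0 where M0: "\<And>m. m \<ge> M0 \<Longrightarrow> dist (real (card (A \<inter> {1..m})) / real m) \<delta> < \<delta> / 6"
    unfolding eventually_sequentially by blast
  have "eventually (\<lambda>t. t \<in> {1 - 1 / (8 * (real M0 + 1))<..<1}) (at_left (1::real))"
    by (rule eventually_at_left_real) auto
  then show ?thesis
  proof eventually_elim
    case (elim t)
    define u where "u = 1 - t"
    have u: "0 < u" "u < 1 / (8 * (real M0 + 1))" using elim unfolding u_def by auto
    have u8: "u \<le> 1 / 8" using u by (smt (verit) frac_le of_nat_0_le_iff)
    have t: "0 < t" "t < 1" using u u8 unfolding u_def by auto
    define N where "N = nat \<lfloor>1 / (4 * u)\<rfloor>"
    have fl0: "0 \<le> \<lfloor>1 / (4 * u)\<rfloor>" using u by simp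
    have rN: "real N = real_of_int \<lfloor>1 / (4 * u)\<rfloor>" unfolding N_def using fl0 by simp
    have N1: "real N \<le> 1 / (4 * u)" unfolding rN by linarith
    have N2: "real N \<ge> 1 / (8 * u)"
    proof -
      have "real N > 1 / (4 * u) - 1" unfolding rN by linarith
      moreover have "1 / (8 * u) \<ge> 1" using u u8 by (simp add: field_simps)
      ultimately show ?thesis by (simp add: field_simps)
    qed
    have NM: "real N \<ge> real M0 + 1"
    proof -
      have "1 / (8 * u) \<ge> real M0 + 1" using u by (simp add: field_simps)
      then show ?thesis using N2 by linarith
    qed
    then have NM': "N \<ge> M0" "N \<ge> 1" by linarith+
    have c2: "real (card (A \<inter> {1..2*N})) \<ge> 2 * real N * (5 * \<delta> / 6)"
    proof -
      define q where "q = real (card (A \<inter> {1..2*N})) / real (2*N)"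
      have "2*N \<ge> M0" using NM' by simp
      from M0[OF this] have "dist q \<delta> < \<delta> / 6" unfolding q_def .
      then have "\<bar>q - \<delta>\<bar> < \<delta> / 6" by (simp only: dist_real_def)
      then have "q \<ge> 5 * \<delta> / 6" by (simp only: abs_less_iff) linarith
      moreover have "real (card (A \<inter> {1..2*N})) = q * (2 * real N)" unfolding q_def using NM' by simp
      ultimately show ?thesis using NM' by (simp add: mult_ac)
    qed
    have c1: "real (card (A \<inter> {1..N})) \<le> real N * (7 * \<delta> / 6)"
    proof -
      define q where "q = real (card (A \<inter> {1..N})) / real N"
      from M0[OF NM'(1)] have "dist q \<delta> < \<delta> / 6" unfolding q_def .
      then have "\<bar>q - \<delta>\<bar> < \<delta> / 6" by (simp only: dist_real_def)
      then have "q \<le> 7 * \<delta> / 6" by (simp only: abs_less_iff) linarith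
      moreover have "real (card (A \<inter> {1..N})) = q * real N" unfolding q_def using NM' by simp
      ultimately show ?thesis using NM' by (simp add: mult_ac)
    qed
    have "A \<inter> {N<..2*N} = (A \<inter> {1..2*N}) - (A \<inter> {1..N})" using A1 by auto
    moreover have "card (A \<inter> {1..2*N} - A \<inter> {1..N}) = card (A \<inter> {1..2*N}) - card (A \<inter> {1..N})"
      by (rule card_Diff_subset) auto
    ultimately have "card (A \<inter> {N<..2*N}) = card (A \<inter> {1..2*N}) - card (A \<inter> {1..N})"
      by simp
    moreover have "card (A \<inter> {1..N}) \<le> card (A \<inter> {1..2*N})"
      by (intro card_mono) auto
    ultimately have "real (card (A \<inter> {N<..2*N})) = real (card (A \<inter> {1..2*N})) - real (card (A \<inter> {1..N}))"
      by simp
    then have cN: "real (card (A \<inter> {N<..2*N})) \<ge> real N * \<delta> / 2"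
      using c1 c2 by (simp add: field_simps)
    have tN: "t ^ (2 * N) \<ge> 1 / 2"
    proof -
      have Bern: "1 + real (2 * N) * (- u) \<le> (1 + (- u)) ^ (2 * N)"
        by (rule Bernoulli_inequality) (use u u8 in auto)
      have eq: "1 + (- u) = t" unfolding u_def by simp
      have B2: "1 + real (2 * N) * (- u) \<le> t ^ (2 * N)" using Bern unfolding eq .
      moreover have "real N * u \<le> 1 / 4" using N1 u by (simp add: field_simps)
      moreover have "real (2 * N) * (- u) = - 2 * (real N * u)" by simp
      ultimately show ?thesis by linarith
    qed
    have "Br A t \<ge> real (card (A \<inter> {N<..2*N})) * real N ^ 2 * t ^ (2 * N)"
      by (rule Br_lower_pt[OF t A1])
    moreover have "real (card (A \<inter> {N<..2*N})) * real N ^ 2 * t ^ (2 * N) \<ge> (real N * \<delta> / 2) * real N ^ 2 * (1 / 2)"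
      using cN tN d by (intro mult_mono) auto
    moreover have "(real N * \<delta> / 2) * real N ^ 2 * (1 / 2) = \<delta> / 4 * real N ^ 3"
      by (simp add: power2_eq_square power3_eq_cube)
    moreover have "\<delta> / 4 * (1 / 512 / u ^ 3) \<le> \<delta> / 4 * real N ^ 3"
    proof (rule mult_left_mono)
      have "real N ^ 3 \<ge> (1 / (8 * u)) ^ 3" using N2 u by (intro power_mono) auto
      moreover have "(1 / (8 * u)) ^ 3 = 1 / 512 / u ^ 3" by (simp add: power_divide power_mult_distrib)
      ultimately show "1 / 512 / u ^ 3 \<le> real N ^ 3" by simp
    qed (use d in simp)
    ultimately have "Br A t \<ge> \<delta> / 4 * (1 / 512 / u ^ 3)"
      by linarith
    then show ?case unfolding u_def by (simp add: field_simps)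
  qed
qed

lemma ratio_tendsto:
  fixes \<delta> :: real
  assumes A1: "A \<subseteq> {1..}"
    and dens: "(\<lambda>n. real (card (A \<inter> {1..n})) / real n) \<longlonglongrightarrow> \<delta>" and d: "\<delta> > 0"
  shows "((\<lambda>t. Cr A t / sqrt (Br A t) ^ 3) \<longlongrightarrow> 0) (at_left 1)"
proof -
  define \<kappa> where "\<kappa> = \<delta> / 2048"
  have k: "\<kappa> > 0" using d unfolding \<kappa>_def by auto
  define K where "K = 512 / (\<kappa> * sqrt \<kappa>)"
  have ev: "eventually (\<lambda>t. Br A t \<ge> \<kappa> / (1 - t) ^ 3 \<and> t \<in> {0<..<1}) (at_left 1)"
    unfolding \<kappa>_def
    by (rule eventually_conj[OF Br_lower[OF assms] eventually_at_left_real[of 0 "1::real"]]) simp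
  have evb: "eventually (\<lambda>t. 0 \<le> Cr A t / sqrt (Br A t) ^ 3 \<and> Cr A t / sqrt (Br A t) ^ 3 \<le> K * sqrt (1 - t)) (at_left 1)"
    using ev
  proof eventually_elim
    case (elim t)
    then have t: "0 < t" "t < 1" and Bl: "Br A t \<ge> \<kappa> / (1 - t) ^ 3" by auto
    define u where "u = 1 - t"
    have u: "0 < u" using t unfolding u_def by auto
    define b where "b = sqrt (Br A t)"
    have "\<kappa> / (1 - t) ^ 3 > 0" using k t by simp
    then have Bpos: "Br A t > 0" using Bl by linarith
    have b: "b > 0" "b ^ 2 = Br A t" unfolding b_def using Bpos by auto
    have Cnn: "Cr A t \<ge> 0" unfolding Cr_def
      by (intro suminf_nonneg sC) (use t sig_nonneg in auto)
    define w where "w = u ^ 3 * b ^ 2"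
    have Bl': "Br A t \<ge> \<kappa> / u ^ 3" using Bl unfolding u_def .
    have "u ^ 3 * (\<kappa> / u ^ 3) \<le> u ^ 3 * Br A t" using Bl' u by (intro mult_left_mono) auto
    then have w: "w \<ge> \<kappa>" unfolding w_def using u b by simp
    have sw: "sqrt w = u * sqrt u * b"
    proof -
      have "w = (u * b) ^ 2 * u" unfolding w_def by (simp add: power2_eq_square power3_eq_cube)
      then have "sqrt w = sqrt ((u * b) ^ 2) * sqrt u" by (simp only: real_sqrt_mult)
      also have "sqrt ((u * b) ^ 2) = u * b" using u b by (simp only: real_sqrt_abs abs_of_pos mult_pos_pos)
      finally show ?thesis by simp
    qed
    have "\<kappa> * sqrt \<kappa> \<le> w * sqrt w" using w k by (intro mult_mono) auto
    also have "w * sqrt w = w * (u * sqrt u * b)" by (simp only: sw)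
    also have "\<dots> = u ^ 4 * sqrt u * b ^ 3" unfolding w_def
      by (simp add: power2_eq_square power3_eq_cube power4_eq_xxxx)
    finally have key: "\<kappa> * sqrt \<kappa> \<le> u ^ 4 * sqrt u * b ^ 3" .
    have "Cr A t \<le> 512 / u ^ 4" using Cr_bound[OF t] unfolding u_def .
    also have "\<dots> = 512 / u ^ 4 * 1" by simp
    also have "\<dots> \<le> 512 / u ^ 4 * ((u ^ 4 * sqrt u * b ^ 3) / (\<kappa> * sqrt \<kappa>))"
      using key k u by (intro mult_left_mono) (auto simp: le_divide_eq_1)
    also have "\<dots> = K * sqrt u * b ^ 3" unfolding K_def using u k by simp
    finally have "Cr A t \<le> K * sqrt u * b ^ 3" .
    then have le: "Cr A t / b ^ 3 \<le> K * sqrt u" using b by (simp add: divide_le_eq mult_ac)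
    have nn: "0 \<le> Cr A t / b ^ 3" using Cnn b by simp
    show ?case using le nn unfolding b_def u_def by simp
  qed
  have lim: "((\<lambda>t. K * sqrt (1 - t)) \<longlongrightarrow> 0) (at_left (1::real))"
  proof -
    have "((\<lambda>t. K * sqrt (1 - t)) \<longlongrightarrow> K * sqrt (1 - 1)) (at_left (1::real))"
      by (intro tendsto_intros)
    then show ?thesis by simp
  qed
  have e1: "eventually (\<lambda>t. 0 \<le> Cr A t / sqrt (Br A t) ^ 3) (at_left 1)"
    by (rule eventually_mono[OF evb]) (rule conjunct1)
  have e2: "eventually (\<lambda>t. Cr A t / sqrt (Br A t) ^ 3 \<le> K * sqrt (1 - t)) (at_left 1)"
    by (rule eventually_mono[OF evb]) (rule conjunct2)
  show ?thesis
    by (rule tendsto_sandwich[OF e1 e2 tendsto_const lim])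
qed

lemma norm_sums_le:
  fixes f :: "nat \<Rightarrow> 'a::banach"
  assumes "f sums S" "summable g" "\<And>n. norm (f n) \<le> g n"
  shows "norm S \<le> suminf g"
proof -
  have sn: "summable (\<lambda>n. norm (f n))"
    by (rule summable_comparison_test'[OF assms(2), where N=0]) (use assms(3) in simp)
  have "norm S = norm (suminf f)" using assms(1) by (simp add: sums_iff)
  also have "\<dots> \<le> (\<Sum>n. norm (f n))" by (rule summable_norm[OF sn])
  also have "\<dots> \<le> suminf g" by (intro suminf_le sn assms)
  finally show ?thesis .
qed

lemma ncl: "real n * cl A n = sig A n"
  by (cases "n = 0") (auto simp: cl_def)

lemma eval_Fp_real:
  fixes t :: real assumes t: "0 \<le> t" "t < 1"
  shows "eval_fps (Fp A) (of_real t) = of_real (Fr A t)"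
proof -
  have "(\<lambda>n. of_real (pa A n * t ^ n) :: complex) sums of_real (Fr A t)"
    unfolding Fr_def by (intro sums_of_real summable_sums sF t)
  then show ?thesis unfolding eval_fps_def Fp_def by (simp add: sums_iff)
qed

definition "Lz A z = eval_fps (Lp A) z"

definition Psi :: "nat set \<Rightarrow> real \<Rightarrow> real \<Rightarrow> complex" where
  "Psi A u t = (let \<theta> = u / sqrt (Br A t) in
      Lz A (of_real t * iexp \<theta>) - Lz A (of_real t) - \<i> * of_real (\<theta> * Sr A t))"

definition phi :: "nat set \<Rightarrow> real \<Rightarrow> real \<Rightarrow> complex" where
  "phi A u t = (\<Sum>n. of_real (pa A n * t ^ n / Fr A t) *
       iexp (u * ((real n - Sr A t) / sqrt (Br A t))))"

lemma Br_pos: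
  assumes t: "0 < t" "t < 1" and A1: "A \<subseteq> {1..}" and Ane: "A \<noteq> {}"
  shows "Br A t > 0"
proof -
  obtain j where j: "j \<in> A" using Ane by auto
  have j1: "j \<ge> 1" using j A1 by auto
  have "0 < real j * sig A j * t ^ j"
    using sig_ge[OF j j1] j1 t by (intro mult_pos_pos) auto
  also have "\<dots> \<le> Br A t"
    unfolding Br_def using sum_le_suminf[OF sB[of t A], of "{j}"] t sig_nonneg[of A] by auto
  finally show ?thesis .
qed

lemma iexp_pow: "iexp x ^ n = iexp (real n * x)"
  by (simp add: exp_of_nat_mult[symmetric] mult_ac)

lemma phi_eq:
  assumes t: "0 < t" "t < 1" and A1: "A \<subseteq> {1..}" and Ane: "A \<noteq> {}"
  shows "phi A u t = exp (Psi A u t)"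
proof -
  define \<theta> where "\<theta> = u / sqrt (Br A t)"
  define m where "m = Sr A t"
  define F where "F = Fr A t"
  define z where "z = of_real t * iexp \<theta>"
  have F1: "F \<ge> 1" unfolding F_def using Fr_ge1 t by auto
  have nz: "norm z < 1" unfolding z_def using t by (simp add: norm_mult)
  have nz': "ereal (norm z) < 1" using nz by simp
  have rF: "norm z < fps_conv_radius (Fp A)" using nz' Fp_radius[of A] by (meson less_le_trans)
  have s1: "(\<lambda>n. fps_nth (Fp A) n * z ^ n) sums eval_fps (Fp A) z"
    by (rule sums_eval_fps[OF rF])
  have "(\<lambda>n. (iexp (- (\<theta> * m)) / of_real F) * (fps_nth (Fp A) n * z ^ n)) sums
        ((iexp (- (\<theta> * m)) / of_real F) * eval_fps (Fp A) z)"
    by (rule sums_mult[OF s1])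
  moreover have "(iexp (- (\<theta> * m)) / of_real F) * (fps_nth (Fp A) n * z ^ n) =
      of_real (pa A n * t ^ n / Fr A t) * iexp (u * ((real n - Sr A t) / sqrt (Br A t)))" for n
  proof -
    have "u * ((real n - m) / sqrt (Br A t)) = real n * \<theta> + (- (\<theta> * m))"
      unfolding \<theta>_def by (simp add: diff_divide_distrib algebra_simps)
    then have "iexp (u * ((real n - m) / sqrt (Br A t))) = iexp (real n * \<theta>) * iexp (- (\<theta> * m))"
      by (simp only: of_real_add distrib_left exp_add)
    then show ?thesis
      unfolding z_def F_def m_def Fp_def using F1
      by (simp add: power_mult_distrib iexp_pow field_simps del: of_real_mult) (simp add: mult_ac)
  qed
  ultimately have "phi A u t = (iexp (- (\<theta> * m)) / of_real F) * eval_fps (Fp A) z"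
    unfolding phi_def by (simp add: sums_iff)
  also have "eval_fps (Fp A) z = exp (Lz A z)" unfolding Lz_def by (rule Fp_exp[OF nz])
  also have "of_real F = exp (Lz A (of_real t))"
    unfolding F_def Lz_def using eval_Fp_real[of t A] Fp_exp[of "of_real t" A] t by simp
  also have "iexp (- (\<theta> * m)) / exp (Lz A (of_real t)) * exp (Lz A z) = exp (Psi A u t)"
    unfolding Psi_def Let_def \<theta>_def[symmetric] z_def[symmetric] m_def[symmetric]
    by (simp add: exp_diff exp_add[symmetric] field_simps)
  finally show ?thesis .
qed

lemma sum2: "(\<Sum>k\<le>2. (\<i> * complex_of_real x) ^ k / fact k) = 1 + \<i> * of_real x - of_real (x ^ 2 / 2)"
  by (simp add: eval_nat_numeral power2_eq_square field_simps)

lemma Psi_bound: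
  assumes t: "0 < t" "t < 1" and A1: "A \<subseteq> {1..}" and Ane: "A \<noteq> {}"
  shows "norm (Psi A u t + of_real (u ^ 2 / 2)) \<le> \<bar>u\<bar> ^ 3 * Cr A t / (6 * sqrt (Br A t) ^ 3)"
proof -
  define B where "B = Br A t"
  have B: "B > 0" unfolding B_def by (rule Br_pos[OF assms])
  define \<sigma> where "\<sigma> = sqrt B"
  have \<sigma>: "\<sigma> > 0" "\<sigma> ^ 2 = B" unfolding \<sigma>_def using B by auto
  define \<theta> where "\<theta> = u / \<sigma>"
  define m where "m = Sr A t"
  define z where "z = of_real t * iexp \<theta>"
  have nz: "norm z < 1" unfolding z_def using t by (simp add: norm_mult)
  have nz': "ereal (norm z) < 1" using nz by simp
  have rz: "norm z < fps_conv_radius (Lp A)" using nz' Lp_radius[of A] by (meson less_le_trans)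
  have nt': "ereal (norm (complex_of_real t)) < 1" using t by simp
  have rt: "norm (complex_of_real t) < fps_conv_radius (Lp A)" using nt' Lp_radius[of A] by (meson less_le_trans)
  have sz: "(\<lambda>n. of_real (cl A n) * z ^ n) sums Lz A z"
    using sums_eval_fps[OF rz] unfolding Lz_def by (simp add: Lp_def)
  have st: "(\<lambda>n. of_real (cl A n) * of_real t ^ n) sums Lz A (of_real t)"
    using sums_eval_fps[OF rt] unfolding Lz_def by (simp add: Lp_def)
  have sm: "(\<lambda>n. of_real (sig A n * t ^ n) :: complex) sums of_real m"
    unfolding m_def Sr_def using t by (intro sums_of_real summable_sums sS) auto
  have sB: "(\<lambda>n. of_real (real n * sig A n * t ^ n) :: complex) sums of_real B"
    unfolding B_def Br_def using t by (intro sums_of_real summable_sums sB) auto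
  define f where "f = (\<lambda>n. of_real (cl A n) * z ^ n - of_real (cl A n) * of_real t ^ n
       - \<i> * of_real \<theta> * of_real (sig A n * t ^ n) + of_real (\<theta> ^ 2 / 2) * of_real (real n * sig A n * t ^ n))"
  have sf: "f sums (Lz A z - Lz A (of_real t) - \<i> * of_real \<theta> * of_real m + of_real (\<theta> ^ 2 / 2) * of_real B)"
    unfolding f_def by (intro sums_add sums_diff sums_mult sz st sm sB)
  have val: "Lz A z - Lz A (of_real t) - \<i> * of_real \<theta> * of_real m + of_real (\<theta> ^ 2 / 2) * of_real B
      = Psi A u t + of_real (u ^ 2 / 2)"
  proof -
    have "\<theta> ^ 2 / 2 * B = u ^ 2 / 2" unfolding \<theta>_def using \<sigma> B by (simp add: power_divide)
    then have "of_real (\<theta> ^ 2 / 2) * (of_real B :: complex) = of_real (u ^ 2 / 2)"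
      by (metis of_real_mult)
    then show ?thesis
      unfolding Psi_def Let_def B_def[symmetric] \<sigma>_def[symmetric] \<theta>_def[symmetric] z_def[symmetric] m_def[symmetric]
      by (simp add: mult_ac)
  qed
  have fn: "f n = of_real (cl A n * t ^ n) * (iexp (real n * \<theta>) - (\<Sum>k\<le>2. (\<i> * complex_of_real (real n * \<theta>)) ^ k / fact k))" for n
  proof -
    have e1: "of_real (cl A n) * z ^ n = of_real (cl A n * t ^ n) * iexp (real n * \<theta>)"
      unfolding z_def by (simp add: power_mult_distrib iexp_pow)
    have e2: "(of_real (sig A n * t ^ n) :: complex) = of_real (cl A n * t ^ n) * of_real (real n)"
      by (simp add: ncl[symmetric] mult_ac)
    have e3: "(of_real (real n * sig A n * t ^ n) :: complex) = of_real (cl A n * t ^ n) * of_real (real n ^ 2)"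
      by (simp add: ncl[symmetric] mult_ac power2_eq_square)
    show ?thesis unfolding f_def e1 e2 e3 sum2
      by (simp add: algebra_simps power2_eq_square)
  qed
  have bnd: "norm (f n) \<le> \<bar>\<theta>\<bar> ^ 3 / 6 * (real n ^ 2 * sig A n * t ^ n)" for n
  proof -
    have "norm (f n) = cl A n * t ^ n * norm (iexp (real n * \<theta>) - (\<Sum>k\<le>2. (\<i> * complex_of_real (real n * \<theta>)) ^ k / fact k))"
      unfolding fn using t cl_nonneg[of A n] by (simp add: norm_mult norm_power)
    also have "\<dots> \<le> cl A n * t ^ n * (\<bar>real n * \<theta>\<bar> ^ Suc 2 / fact (Suc 2))"
      using t cl_nonneg[of A n] by (intro mult_left_mono iexp_approx1) auto
    also have "\<dots> = \<bar>\<theta>\<bar> ^ 3 / 6 * ((real n * cl A n) * real n ^ 2 * t ^ n)"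
      by (simp add: abs_mult power_mult_distrib fact_numeral power3_eq_cube power2_eq_square)
    finally show ?thesis by (simp add: ncl mult_ac)
  qed
  have "norm (Psi A u t + of_real (u ^ 2 / 2)) \<le> (\<Sum>n. \<bar>\<theta>\<bar> ^ 3 / 6 * (real n ^ 2 * sig A n * t ^ n))"
    using norm_sums_le[OF sf _ bnd] sC[of t A] t unfolding val by (auto intro: summable_mult)
  also have "\<dots> = \<bar>\<theta>\<bar> ^ 3 / 6 * Cr A t"
    unfolding Cr_def using sC[of t A] t by (intro suminf_mult) auto
  also have "\<dots> = \<bar>u\<bar> ^ 3 * Cr A t / (6 * sqrt (Br A t) ^ 3)"
    unfolding \<theta>_def \<sigma>_def B_def using \<sigma> B unfolding B_def by (simp add: power_divide abs_divide)
  finally show ?thesis .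
qed

lemma A_nonempty:
  fixes \<delta> :: real
  assumes dens: "(\<lambda>n. real (card (A \<inter> {1..n})) / real n) \<longlonglongrightarrow> \<delta>" and d: "\<delta> > 0"
  shows "A \<noteq> {}"
proof
  assume "A = {}"
  then have "(\<lambda>n. real (card (A \<inter> {1..n})) / real n) = (\<lambda>n. 0)" by simp
  with dens have "(\<lambda>n. 0::real) \<longlonglongrightarrow> \<delta>" by simp
  then have "\<delta> = 0" using LIMSEQ_unique tendsto_const by blast
  with d show False by simp
qed

lemma phi_lim:
  fixes \<delta> :: real
  assumes A1: "A \<subseteq> {1..}"
    and dens: "(\<lambda>n. real (card (A \<inter> {1..n})) / real n) \<longlonglongrightarrow> \<delta>" and d: "\<delta> > 0"
  shows "((\<lambda>t. phi A u t) \<longlongrightarrow> complex_of_real (exp (- (u ^ 2) / 2))) (at_left 1)"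
proof -
  have Ane: "A \<noteq> {}" by (rule A_nonempty[OF dens d])
  define R where "R = (\<lambda>t. Psi A u t + of_real (u ^ 2 / 2))"
  have ev01: "eventually (\<lambda>t. t \<in> {0<..<1}) (at_left (1::real))"
    by (rule eventually_at_left_real) simp
  have "((\<lambda>t. \<bar>u\<bar> ^ 3 / 6 * (Cr A t / sqrt (Br A t) ^ 3)) \<longlongrightarrow> \<bar>u\<bar> ^ 3 / 6 * 0) (at_left 1)"
    by (intro tendsto_mult tendsto_const ratio_tendsto[OF assms])
  then have g0: "((\<lambda>t. \<bar>u\<bar> ^ 3 / 6 * (Cr A t / sqrt (Br A t) ^ 3)) \<longlongrightarrow> 0) (at_left 1)" by simp
  have "eventually (\<lambda>t. norm (R t) \<le> \<bar>u\<bar> ^ 3 / 6 * (Cr A t / sqrt (Br A t) ^ 3)) (at_left 1)"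
    using ev01
  proof (rule eventually_mono)
    fix t :: real assume "t \<in> {0<..<1}"
    then have t: "0 < t" "t < 1" by auto
    show "norm (R t) \<le> \<bar>u\<bar> ^ 3 / 6 * (Cr A t / sqrt (Br A t) ^ 3)"
      unfolding R_def using Psi_bound[OF t A1 Ane, of u] by simp
  qed
  then have R0: "(R \<longlongrightarrow> 0) (at_left 1)" by (rule Lim_null_comparison[OF _ g0])
  have "((\<lambda>t. exp (- of_real (u ^ 2 / 2) + R t)) \<longlongrightarrow> exp (- of_real (u ^ 2 / 2) + 0)) (at_left 1)"
    by (intro tendsto_intros R0)
  moreover have "exp (- of_real (u ^ 2 / 2) + 0) = complex_of_real (exp (- (u ^ 2) / 2))"
    by (simp add: exp_of_real[symmetric])
  moreover have "eventually (\<lambda>t. exp (- of_real (u ^ 2 / 2) + R t) = phi A u t) (at_left 1)"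
    using ev01
  proof (rule eventually_mono)
    fix t :: real assume "t \<in> {0<..<1}"
    then have t: "0 < t" "t < 1" by auto
    show "exp (- of_real (u ^ 2 / 2) + R t) = phi A u t"
      unfolding R_def phi_eq[OF t A1 Ane] by simp
  qed
  ultimately show ?thesis by (simp add: tendsto_cong)
qed

definition pp :: "nat set \<Rightarrow> real \<Rightarrow> nat \<Rightarrow> real" where
  "pp A t n = pa A n * t ^ n / Fr A t"

definition gg :: "nat set \<Rightarrow> real \<Rightarrow> nat \<Rightarrow> real" where
  "gg A t n = (real n - Sr A t) / sqrt (Br A t)"

definition mu :: "nat set \<Rightarrow> real \<Rightarrow> real measure" where
  "mu A t = distr (density (count_space UNIV) (\<lambda>n. ennreal (pp A t n))) borel (gg A t)"

context
  fixes A :: "nat set" and t :: real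
  assumes t: "0 < t" "t < 1"
begin

lemma pp_nonneg: "pp A t n \<ge> 0"
  unfolding pp_def using pa_nonneg[of A n] t Fr_ge1[of t A] by auto

lemma pp_sums: "pp A t sums 1"
proof -
  have "(\<lambda>n. pa A n * t ^ n / Fr A t) sums (Fr A t / Fr A t)"
    unfolding Fr_def[of A t] by (intro sums_divide summable_sums sF) (use t in auto)
  then show ?thesis using Fr_ge1[of t A] t unfolding pp_def by simp
qed

lemma prob_dens: "prob_space (density (count_space UNIV) (\<lambda>n. ennreal (pp A t n)))"
proof
  have "emeasure (density (count_space UNIV) (\<lambda>n. ennreal (pp A t n))) UNIV =
        (\<integral>\<^sup>+ n. ennreal (pp A t n) \<partial>count_space UNIV)"
    by (subst emeasure_density) auto
  also have "\<dots> = (\<Sum>n. ennreal (pp A t n))" by (rule nn_integral_count_space_nat)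
  also have "\<dots> = ennreal (\<Sum>n. pp A t n)"
    by (rule suminf_ennreal2) (use pp_nonneg sums_summable[OF pp_sums] in auto)
  also have "\<dots> = 1" using pp_sums by (simp add: sums_iff)
  finally show "emeasure (density (count_space UNIV) (\<lambda>n. ennreal (pp A t n)))
      (space (density (count_space UNIV) (\<lambda>n. ennreal (pp A t n)))) = 1" by simp
qed

lemma real_distr_mu: "real_distribution (mu A t)"
proof -
  interpret prob_space "density (count_space UNIV) (\<lambda>n. ennreal (pp A t n))" by (rule prob_dens)
  show ?thesis unfolding mu_def by (rule real_distribution_distr) simp
qed

lemma integral_mu:
  fixes f :: "real \<Rightarrow> 'b::{banach, second_countable_topology}"
  assumes f: "f \<in> borel_measurable borel" and sm: "summable (\<lambda>n. pp A t n * norm (f (gg A t n)))"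
  shows "integral\<^sup>L (mu A t) f = (\<Sum>n. pp A t n *\<^sub>R f (gg A t n))"
proof -
  have "integral\<^sup>L (mu A t) f = integral\<^sup>L (density (count_space UNIV) (\<lambda>n. ennreal (pp A t n))) (\<lambda>n. f (gg A t n))"
    unfolding mu_def by (rule integral_distr) (use f in auto)
  also have "\<dots> = integral\<^sup>L (count_space UNIV) (\<lambda>n. pp A t n *\<^sub>R f (gg A t n))"
    by (rule integral_density) (use pp_nonneg in auto)
  also have "\<dots> = (\<Sum>n. pp A t n *\<^sub>R f (gg A t n))"
  proof (rule integral_count_space_nat)
    show "integrable (count_space UNIV) (\<lambda>n. pp A t n *\<^sub>R f (gg A t n))"
      unfolding integrable_count_space_nat_iff using sm pp_nonneg by simp
  qed
  finally show ?thesis .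
qed

lemma char_mu: "char (mu A t) u = phi A u t"
proof -
  have "char (mu A t) u = (\<Sum>n. pp A t n *\<^sub>R iexp (u * gg A t n))"
    unfolding char_def
    by (rule integral_mu) (use sums_summable[OF pp_sums] in auto)
  also have "\<dots> = phi A u t"
    unfolding phi_def pp_def gg_def by (simp add: scaleR_conv_of_real)
  finally show ?thesis .
qed

lemma cdf_mu: "cdf (mu A t) x = ps_norm_cdf (pa A) t x"
proof -
  interpret real_distribution "mu A t" by (rule real_distr_mu)
  have "cdf (mu A t) x = integral\<^sup>L (mu A t) (indicator {..x})"
    by (simp add: cdf_def)
  also have "\<dots> = (\<Sum>n. pp A t n *\<^sub>R (indicator {..x} (gg A t n) :: real))"
  proof (rule integral_mu)
    show "summable (\<lambda>n. pp A t n * norm (indicator {..x} (gg A t n) :: real))"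
      by (rule summable_comparison_test'[OF sums_summable[OF pp_sums], where N=0])
         (use pp_nonneg in \<open>auto simp: indicator_def\<close>)
  qed simp
  also have "\<dots> = (\<Sum>n. (if (real n - ps_mean (pa A) t) / sqrt (ps_var (pa A) t) \<le> x
                         then pa A n * t ^ n else 0) / ps_val (pa A) t)"
    unfolding ps_mean_eq[OF less_imp_le[OF t(1)] t(2)] ps_var_eq[OF less_imp_le[OF t(1)] t(2)]
      ps_val_eq[OF less_imp_le[OF t(1)] t(2)]
    by (intro suminf_cong) (simp add: pp_def gg_def indicator_def)
  also have "\<dots> = ps_norm_cdf (pa A) t x"
    unfolding ps_norm_cdf_def
  proof (rule suminf_divide)
    show "summable (\<lambda>n. if (real n - ps_mean (pa A) t) / sqrt (ps_var (pa A) t) \<le> x then pa A n * t ^ n else 0)"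
      by (rule summable_comparison_test'[OF sF[of t A], where N=0])
         (use t pa_nonneg in auto)
  qed
  finally show ?thesis .
qed

end

lemma A_infinite:
  fixes \<delta> :: real
  assumes dens: "(\<lambda>n. real (card (A \<inter> {1..n})) / real n) \<longlonglongrightarrow> \<delta>" and d: "\<delta> > 0"
  shows "infinite A"
proof
  assume fin: "finite A"
  have "(\<lambda>n. real (card A) * inverse (real n)) \<longlonglongrightarrow> real (card A) * 0"
    by (intro tendsto_intros lim_inverse_n)
  then have l0: "(\<lambda>n. real (card A) / real n) \<longlonglongrightarrow> 0" by (simp add: divide_inverse)
  have "\<delta> \<le> 0"
  proof (rule LIMSEQ_le[OF dens l0])
    show "\<exists>N. \<forall>n\<ge>N. real (card (A \<inter> {1..n})) / real n \<le> real (card A) / real n"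
      using fin by (intro exI[of _ 0] allI impI divide_right_mono) (auto intro: card_mono)
  qed
  with d show False by simp
qed

lemma pa_conv_radius:
  fixes \<delta> :: real
  assumes A1: "A \<subseteq> {1..}"
    and dens: "(\<lambda>n. real (card (A \<inter> {1..n})) / real n) \<longlonglongrightarrow> \<delta>" and d: "\<delta> > 0"
  shows "conv_radius (pa A) = 1"
proof (rule antisym[OF _ pa_conv_radius_ge])
  show "conv_radius (pa A) \<le> 1"
  proof (rule ccontr)
    assume "\<not> conv_radius (pa A) \<le> 1"
    then have c1: "1 < conv_radius (pa A)" by (simp add: not_le)
    have "ereal (norm (1::real)) < conv_radius (pa A)" using c1 by (metis norm_one one_ereal_def)
    from summable_in_conv_radius[OF this] have s: "summable (pa A)" by simp
    define n where "n = nat \<lceil>suminf (pa A)\<rceil> + 1"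
    obtain B where B: "finite B" "card B = n" "B \<subseteq> A"
      using infinite_arbitrarily_large[OF A_infinite[OF dens d]] by blast
    have "real n = (\<Sum>j\<in>B. 1)" using B by simp
    also have "\<dots> \<le> (\<Sum>j\<in>B. pa A j)"
      by (intro sum_mono pa_ge) (use B A1 in auto)
    also have "\<dots> \<le> suminf (pa A)"
      by (rule sum_le_suminf[OF s B(1)]) (use pa_nonneg in auto)
    finally show False unfolding n_def by linarith
  qed
qed

lemma PA_factor_exp:
  assumes z: "norm z < 1" and A1: "A \<subseteq> {1..}"
  shows "exp (if j \<in> A then - Ln (1 - z ^ j) else 0) = PA_factor A z j"
proof (cases "j \<in> A")
  case True
  then have j1: "j \<ge> 1" using A1 by auto
  have "norm (z ^ j) < 1"
    using j1 z power_decreasing[of 1 j "norm z"] by (simp add: norm_power)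
  then have "1 - z ^ j \<noteq> 0" by (metis norm_one order_less_irrefl right_minus_eq)
  then show ?thesis using True by (simp add: PA_factor_def exp_minus divide_inverse)
qed (simp add: PA_factor_def)

lemma std_normal_singleton: "measure std_normal_distribution {x} = 0"
proof (rule measure_eq_0_null_sets)
  have "AE y in lborel. y \<in> {x} \<longrightarrow> ennreal (std_normal_density y) = 0"
    using AE_lborel_singleton[of x] by eventually_elim simp
  then show "{x} \<in> null_sets std_normal_distribution"
    by (subst null_sets_density_iff) auto
qed

theorem mainTheorem12:
  fixes A :: "nat set" and \<delta> :: real
  assumes "A \<subseteq> {1..}"
    and "(\<lambda>n. real (card (A \<inter> {1..n})) / real n) \<longlonglongrightarrow> \<delta>"
    and "\<delta> > 0"
  shows "\<exists>a :: nat \<Rightarrow> real.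
           in_class_K a \<and> conv_radius a = 1 \<and>
           (\<forall>z::complex. norm z < 1 \<longrightarrow>
               summable (\<lambda>n. of_real (a n) * z ^ n) \<and>
               PA_factor A z has_prod (\<Sum>n. of_real (a n) * z ^ n)) \<and>
           gaussian_ps a 1"
proof (intro exI[of _ "pa A"] conjI allI impI)
  note A1 = assms(1) and dens = assms(2) and d = assms(3)
  have Ane: "A \<noteq> {}" by (rule A_nonempty[OF dens d])
  have cr: "conv_radius (pa A) = 1" by (rule pa_conv_radius[OF assms])
  show "conv_radius (pa A) = 1" by (rule cr)
  show "in_class_K (pa A)"
    unfolding in_class_K_def
  proof (intro conjI allI)
    obtain j where j: "j \<in> A" using Ane by auto
    then have j1: "j \<ge> 1" using A1 by auto
    show "\<exists>n>0. pa A n \<noteq> 0" using pa_ge[OF j j1] j1 by (intro exI[of _ j]) auto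
  qed (use pa_nonneg cr in auto)
  fix z :: complex assume z: "norm z < 1"
  have rz: "ereal (norm z) < conv_radius (\<lambda>n. complex_of_real (pa A n))"
    using z cr by (simp add: conv_radius_of_real)
  show "summable (\<lambda>n. complex_of_real (pa A n) * z ^ n)"
    by (rule summable_in_conv_radius[OF rz])
  have "raw_has_prod (\<lambda>j. exp (if j \<in> A then - Ln (1 - z ^ j) else 0)) 0 (exp (eval_fps (Lp A) z))"
    by (rule sums_imp_has_prod_exp[OF Lp_sums[OF z A1]])
  moreover have "exp (eval_fps (Lp A) z) = (\<Sum>n. complex_of_real (pa A n) * z ^ n)"
    using Fp_exp[OF z, of A] unfolding eval_fps_def Fp_def by simp
  ultimately show "PA_factor A z has_prod (\<Sum>n. complex_of_real (pa A n) * z ^ n)"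
    unfolding has_prod_def PA_factor_exp[OF z A1] by simp
next
  note A1 = assms(1) and dens = assms(2) and d = assms(3)
  show "gaussian_ps (pa A) 1"
    unfolding gaussian_ps_def
  proof (intro allI)
    fix x :: real
    show "((\<lambda>t. ps_norm_cdf (pa A) t x) \<longlongrightarrow> measure std_normal_distribution {..x}) (at_left 1)"
    proof (rule tendsto_at_left_sequentially[of 0])
      fix S :: "nat \<Rightarrow> real"
      assume S1: "\<And>n. S n < 1" and S0: "\<And>n. 0 < S n" and "incseq S" and Slim: "S \<longlonglongrightarrow> 1"
      have fS: "filterlim S (at_left 1) sequentially"
      proof -
        have "\<forall>n. S n \<in> {..<1} \<and> S n \<noteq> 1" using S1 by (auto simp: less_imp_neq)
        then have "eventually (\<lambda>n. S n \<in> {..<1} \<and> S n \<noteq> 1) sequentially" by (rule always_eventually)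
        then show ?thesis unfolding filterlim_at using Slim by simp
      qed
      interpret N: real_distribution std_normal_distribution by (rule real_dist_normal_dist)
      define M where "M = (\<lambda>n. mu A (S n))"
      have rdM: "\<And>n. real_distribution (M n)"
        unfolding M_def by (rule real_distr_mu[OF S0 S1])
      have "weak_conv_m M std_normal_distribution"
      proof (rule levy_continuity[OF rdM real_dist_normal_dist])
        fix u :: real
        have "(\<lambda>n. phi A u (S n)) \<longlonglongrightarrow> complex_of_real (exp (- (u ^ 2) / 2))"
          by (rule filterlim_compose[OF phi_lim[OF A1 dens d] fS])
        moreover have "char (M n) u = phi A u (S n)" for n
          unfolding M_def by (rule char_mu[OF S0 S1])
        ultimately show "(\<lambda>n. char (M n) u) \<longlonglongrightarrow> char std_normal_distribution u"
          by (simp add: char_std_normal_distribution)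
      qed
      then have "(\<lambda>n. cdf (M n) x) \<longlonglongrightarrow> cdf std_normal_distribution x"
        unfolding weak_conv_m_def weak_conv_def
        using N.isCont_cdf std_normal_singleton by auto
      moreover have "cdf (M n) x = ps_norm_cdf (pa A) (S n) x" for n
        unfolding M_def by (rule cdf_mu[OF S0 S1])
      ultimately show "(\<lambda>n. ps_norm_cdf (pa A) (S n) x) \<longlonglongrightarrow> measure std_normal_distribution {..x}"
        by (simp add: cdf_def)
    qed simp
  qed
qed

end
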